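(* Let $X\subset\mathbb{R}$ be an interval and $(X,T,\mu)$ a probability preserving dynamical system which is exponentially mixing for $BV$ against $L^1$, and suppose the short return time estimate holds: there are $C,s>0$ such that $\mu(A(r,n))\le Cr^s$ for all $r>0$ and $n\ge1$. Let $(r_n)_n$ be a sequence of positive numbers and $h:\mathbb{N}\to(0,\infty)$ a function with $h(n)\to\infty$ such that \[ r_n\le\frac{1}{(n\log n)^{1/s}h(n)}\quad\text{and}\quad \int\mu(B(x,r_n))\,d\mu(x)\le\frac{1}{n^2h(n)} \] for all large $n$. Then $\mu(\liminf_n F_{n,r_n}^T)=0$.
   Context: $(X,T,\mu)$ is exponentially mixing for $BV$ against $L^1$ if there are $C,\theta>0$ such that for all $\psi$ of bounded variation, all $\varphi\in L^1(\mu)$ and all $n\ge0$, $\bigl|\int\psi\cdot\varphi\circ T^n\,d\mu-\int\psi\,d\mu\int\varphi\,d\mu\bigr|\le C\|\psi\|_{BV}\|\varphi\|_{L^1}e^{-\theta n}$. $A(r,n):=\{x\in X: |x-T^nx|<r\}$. For $n\in\mathbb{N}$, $r>0$: $F_{n,r}^T:=\{x\in X: |T^ix-T^jx|<r \text{ for some } 0\le i<j<n\}$; $F_{n,r_n}^T$ is this set with $r=r_n$. $B(x,r)$ is the open ball of radius $r$ about $x$. *)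

theory Defs
  imports "HOL-Probability.Probability"
begin

definition var_sums :: "real set \<Rightarrow> (real \<Rightarrow> real) \<Rightarrow> real set" where
  "var_sums X f = {(\<Sum>i<n. \<bar>f (x (Suc i)) - f (x i)\<bar>) | n x.
      (\<forall>i\<le>n. x i \<in> X) \<and> (\<forall>i<n. x i < x (Suc i))}"

definition bounded_variation :: "real set \<Rightarrow> (real \<Rightarrow> real) \<Rightarrow> bool" where
  "bounded_variation X f \<longleftrightarrow> bdd_above (var_sums X f) \<and> bdd_above ((\<lambda>x. \<bar>f x\<bar>) ` X)"

definition total_variation :: "real set \<Rightarrow> (real \<Rightarrow> real) \<Rightarrow> real" where
  "total_variation X f = Sup (var_sums X f)"

definition bv_norm :: "real set \<Rightarrow> (real \<Rightarrow> real) \<Rightarrow> real" where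
  "bv_norm X f = (SUP x\<in>X. \<bar>f x\<bar>) + total_variation X f"

definition exp_mixing_BV_L1 :: "real measure \<Rightarrow> (real \<Rightarrow> real) \<Rightarrow> bool" where
  "exp_mixing_BV_L1 M T \<longleftrightarrow> (\<exists>C \<theta>. C > 0 \<and> \<theta> > 0 \<and>
     (\<forall>\<psi> \<phi> (n::nat). bounded_variation (space M) \<psi> \<longrightarrow> integrable M \<phi> \<longrightarrow>
        \<bar>(\<integral>x. \<psi> x * \<phi> ((T ^^ n) x) \<partial>M) - (\<integral>x. \<psi> x \<partial>M) * (\<integral>x. \<phi> x \<partial>M)\<bar>
          \<le> C * bv_norm (space M) \<psi> * (\<integral>x. \<bar>\<phi> x\<bar> \<partial>M) * exp (- \<theta> * real n)))"

definition A_set :: "real measure \<Rightarrow> (real \<Rightarrow> real) \<Rightarrow> real \<Rightarrow> nat \<Rightarrow> real set" where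
  "A_set M T r n = {x \<in> space M. \<bar>x - (T ^^ n) x\<bar> < r}"

definition F_set :: "real measure \<Rightarrow> (real \<Rightarrow> real) \<Rightarrow> nat \<Rightarrow> real \<Rightarrow> real set" where
  "F_set M T n r = {x \<in> space M. \<exists>i j. i < j \<and> j < n \<and> \<bar>(T ^^ i) x - (T ^^ j) x\<bar> < r}"

end

theory Submission
  imports Defs
begin

lemma arith_bound:
  fixes n K :: nat and r h s C \<theta> Cm :: real
  assumes n3: "n \<ge> 3" and pos: "r > 0" "h > 0" "s > 0" "C > 0" "\<theta> > 0" "Cm > 0"
    and rb: "r \<le> 1 / ((real n * ln (real n)) powr (1 / s) * h)"
    and K: "K = nat \<lceil>3 * ln (real n) / \<theta>\<rceil>"
  shows "real n * (real K * (C * r powr s) + real n * (3 / ((real n)\<^sup>2 * h) + 9 * Cm / (real n) ^ 3))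
     \<le> C * (3 / \<theta> + 1) * h powr (- s) + 3 / h + 9 * Cm / real n"
proof -
  let ?x = "real n"
  have x3: "?x \<ge> 3" using n3 by simp
  have lnx: "ln ?x \<ge> 1"
  proof -
    have "ln 3 \<le> ln ?x" using x3 by simp
    then show ?thesis using ln3_gt_1 by linarith
  qed
  have P: "?x * ln ?x > 0" using x3 lnx by simp
  have "r powr s \<le> (1 / ((?x * ln ?x) powr (1 / s) * h)) powr s"
    using rb pos by (intro powr_mono2) auto
  also have "\<dots> = 1 / (((?x * ln ?x) powr (1 / s)) powr s * h powr s)"
    using P pos by (simp add: powr_divide powr_mult)
  also have "((?x * ln ?x) powr (1 / s)) powr s = ?x * ln ?x"
    using P pos by (simp add: powr_powr)
  finally have rs: "r powr s \<le> 1 / (?x * ln ?x * h powr s)" .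
  define y where "y = 3 * ln ?x / \<theta>"
  have y0: "0 \<le> y" unfolding y_def using lnx pos by simp
  have "real K = of_int \<lceil>y\<rceil>" unfolding K y_def[symmetric] using y0 by simp
  also have "\<dots> \<le> y + 1" by (rule of_int_ceiling_le_add_one)
  finally have "real K \<le> y + 1" .
  then have K1: "real K \<le> (3 / \<theta> + 1) * ln ?x" unfolding y_def using lnx
    by (simp add: field_simps)
  have hs: "h powr s > 0" using pos by simp
  have "?x * (real K * (C * r powr s)) \<le> ?x * ((3 / \<theta> + 1) * ln ?x * (C * (1 / (?x * ln ?x * h powr s))))"
    using K1 rs pos x3 lnx by (intro mult_left_mono mult_mono) auto
  also have "\<dots> = C * (3 / \<theta> + 1) / h powr s"
    using x3 lnx hs by (simp add: field_simps)
  also have "\<dots> = C * (3 / \<theta> + 1) * h powr (- s)"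
    by (simp add: powr_minus_divide)
  finally have t1: "?x * (real K * (C * r powr s)) \<le> C * (3 / \<theta> + 1) * h powr (- s)" .
  have t2: "?x * (?x * (3 / (?x\<^sup>2 * h) + 9 * Cm / ?x ^ 3)) = 3 / h + 9 * Cm / ?x"
    using x3 pos by (simp add: field_simps power2_eq_square power3_eq_cube)
  show ?thesis using t1 t2 by (simp add: distrib_left)
qed

lemma vs_ind_le:
  fixes X :: "real set" and a b t :: real
  assumes "a \<le> b" "t \<in> var_sums X (indicator {x \<in> X. a \<le> x \<and> x < b})"
  shows "t \<le> 2"
proof -
  let ?p = "indicator {x \<in> X. a \<le> x \<and> x < b} :: real \<Rightarrow> real"
  obtain n x where t: "t = (\<Sum>i<n. \<bar>?p (x (Suc i)) - ?p (x i)\<bar>)"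
    and xX: "\<forall>i\<le>n. x i \<in> X" and inc: "\<forall>i<n. x i < x (Suc i)"
    using assms(2) unfolding var_sums_def by blast
  define u where "u y = (if a \<le> y then 1 else 0::real)" for y
  define v where "v y = (if b \<le> y then 1 else 0::real)" for y
  have psi: "?p y = u y - v y" if "y \<in> X" for y
    using that assms(1) by (auto simp: u_def v_def indicator_def)
  have "t \<le> (\<Sum>i<n. (u (x (Suc i)) - u (x i)) + (v (x (Suc i)) - v (x i)))"
    unfolding t
  proof (rule sum_mono)
    fix i assume "i \<in> {..<n}"
    then have h: "x i \<in> X" "x (Suc i) \<in> X" "x i < x (Suc i)" using xX inc by auto
    show "\<bar>?p (x (Suc i)) - ?p (x i)\<bar> \<le> (u (x (Suc i)) - u (x i)) + (v (x (Suc i)) - v (x i))"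
      unfolding psi[OF h(1)] psi[OF h(2)] using h(3) by (auto simp: u_def v_def)
  qed
  also have "\<dots> = (u (x n) - u (x 0)) + (v (x n) - v (x 0))"
    by (simp add: sum.distrib sum_lessThan_telescope[of "\<lambda>i. u (x i)"] sum_lessThan_telescope[of "\<lambda>i. v (x i)"])
  also have "\<dots> \<le> 2" by (simp add: u_def v_def)
  finally show ?thesis .
qed

lemma bv_ind:
  fixes X :: "real set" and a b :: real
  assumes "X \<noteq> {}" "a \<le> b"
  shows "bounded_variation X (indicator {x \<in> X. a \<le> x \<and> x < b})
     \<and> bv_norm X (indicator {x \<in> X. a \<le> x \<and> x < b}) \<le> 3"
proof -
  let ?p = "indicator {x \<in> X. a \<le> x \<and> x < b} :: real \<Rightarrow> real"
  have b1: "bdd_above (var_sums X ?p)"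
    using vs_ind_le[OF assms(2)] by (intro bdd_aboveI[of _ 2]) auto
  have b2: "bdd_above ((\<lambda>x. \<bar>?p x\<bar>) ` X)"
    by (intro bdd_aboveI[of _ 1]) (auto simp: indicator_def)
  obtain x0 where x0: "x0 \<in> X" using assms(1) by blast
  have "\<exists>n xs. (0::real) = (\<Sum>i<n. \<bar>?p (xs (Suc i)) - ?p (xs i)\<bar>) \<and> (\<forall>i\<le>n. xs i \<in> X) \<and> (\<forall>i<n. xs i < xs (Suc i))"
    by (rule exI[of _ 0], rule exI[of _ "\<lambda>_. x0"]) (simp add: x0)
  then have "0 \<in> var_sums X ?p" unfolding var_sums_def by blast
  then have ne: "var_sums X ?p \<noteq> {}" by blast
  have "total_variation X ?p \<le> 2" unfolding total_variation_def
    using vs_ind_le[OF assms(2)] ne by (intro cSup_least) auto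
  moreover have "(SUP x\<in>X. \<bar>?p x\<bar>) \<le> 1"
    using assms(1) by (intro cSUP_least) (auto simp: indicator_def)
  ultimately show ?thesis unfolding bounded_variation_def bv_norm_def using b1 b2 by simp
qed

locale sys = prob_space M for M :: "real measure" +
  fixes T :: "real \<Rightarrow> real"
  assumes sets_eq: "sets M = sets (restrict_space borel (space M))"
  and T_meas[measurable]: "T \<in> measurable M M" and T_inv: "distr M M T = M"
begin

lemma id_meas[measurable]: "(\<lambda>x. x) \<in> borel_measurable M"
  using measurable_restrict_space1[OF measurable_id, of borel "space M"]
  by (subst measurable_cong_sets[OF sets_eq refl])

lemma Tn_meas[measurable]: "(T ^^ n) \<in> measurable M M"
  by (rule measurable_compose_n[OF T_meas])

lemma Tn_space: "x \<in> space M \<Longrightarrow> (T ^^ n) x \<in> space M"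
  using measurable_space[OF Tn_meas] by blast

lemma pres: "A \<in> sets M \<Longrightarrow> measure M ((T ^^ i) -` A \<inter> space M) = measure M A"
proof (induction i)
  case 0 thus ?case using sets.sets_into_space[of A M] by (simp add: Int_absorb2)
next
  case (Suc i)
  have e: "(T ^^ Suc i) -` A \<inter> space M = T -` ((T ^^ i) -` A \<inter> space M) \<inter> space M"
    using measurable_space[OF T_meas] by (auto simp: funpow_swap1)
  have m: "(T ^^ i) -` A \<inter> space M \<in> sets M" using Suc.prems by measurable
  have "measure M ((T ^^ Suc i) -` A \<inter> space M) = measure M (T -` ((T ^^ i) -` A \<inter> space M) \<inter> space M)"
    by (simp only: e)
  also have "\<dots> = measure (distr M M T) ((T ^^ i) -` A \<inter> space M)"
    by (rule measure_distr[OF T_meas m, symmetric])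
  also have "\<dots> = measure M A" using T_inv Suc by simp
  finally show ?case .
qed

lemma borel_set: "B \<in> sets borel \<Longrightarrow> B \<inter> space M \<in> sets M"
  using measurable_sets[OF id_meas, of B] by simp

lemma ball_sets: "ball x r \<inter> space M \<in> sets M"
  by (rule borel_set) simp

definition cell :: "real \<Rightarrow> int \<Rightarrow> real set" where
  "cell r j = {x \<in> space M. \<lfloor>x / r\<rfloor> = j}"

lemma cell_sets[measurable]: "cell r j \<in> sets M"
  unfolding cell_def by measurable

definition fb :: "real \<Rightarrow> real \<Rightarrow> real" where
  "fb r x = measure M (ball x r \<inter> space M)"

lemma fb_meas: "fb r \<in> borel_measurable M"
proof -
  define G where "G y = measure M {z \<in> space M. z < y}" for y
  define F where "F y = measure M {z \<in> space M. z \<le> y}" for y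
  have "mono G" unfolding mono_def G_def
    by (auto intro!: finite_measure_mono)
  have "mono F" unfolding mono_def F_def
    by (auto intro!: finite_measure_mono)
  have Gm: "G \<in> borel_measurable borel" by (rule borel_measurable_mono[OF \<open>mono G\<close>])
  have Fm: "F \<in> borel_measurable borel" by (rule borel_measurable_mono[OF \<open>mono F\<close>])
  have eq: "fb r x = G (x + r) - F (x - r)" if "r > 0" for x
  proof -
    have "ball x r \<inter> space M = {z \<in> space M. z < x + r} - {z \<in> space M. z \<le> x - r}"
      using that by (auto simp: dist_real_def)
    moreover have "{z \<in> space M. z \<le> x - r} \<subseteq> {z \<in> space M. z < x + r}" using that by auto
    ultimately show ?thesis unfolding fb_def G_def F_def
      by (simp add: finite_measure_Diff)
  qed
  show ?thesis
  proof (cases "r > 0")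
    case True
    have "(\<lambda>x. G (x + r) - F (x - r)) \<in> borel_measurable M"
      using Gm Fm by measurable
    moreover have "fb r = (\<lambda>x. G (x + r) - F (x - r))" using eq[OF True] by auto
    ultimately show ?thesis by simp
  next
    case False
    then have "fb r = (\<lambda>_. 0)" by (auto simp: fb_def fun_eq_iff ball_empty)
    then show ?thesis by simp
  qed
qed

lemma fb_int: "integrable M (fb r)"
  by (rule integrable_const_bound[where B=1]) (auto simp: fb_def fb_meas)


lemma cell_sub: "cell r j \<subseteq> space M" by (auto simp: cell_def)

lemma cell_alt: "r > 0 \<Longrightarrow> cell r j = {x \<in> space M. of_int j * r \<le> x \<and> x < (of_int j + 1) * r}"
  by (auto simp: cell_def floor_eq_iff field_simps)

lemma floor_close:
  fixes x y r :: real
  assumes "r > 0" "\<lfloor>x / r\<rfloor> = \<lfloor>y / r\<rfloor>"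
  shows "\<bar>x - y\<bar> < r"
proof -
  have "\<bar>x / r - y / r\<bar> < 1" using assms(2) by linarith
  moreover have "r * (x / r - y / r) = x - y" using assms(1) by (simp add: field_simps)
  then have "\<bar>x - y\<bar> = r * \<bar>x / r - y / r\<bar>" using assms(1)
    by (metis abs_mult abs_of_pos)
  ultimately show ?thesis using assms(1) by simp
qed

lemma floor_near:
  fixes x y r :: real
  assumes "r > 0" "\<bar>x - y\<bar> < r"
  shows "\<lfloor>y / r\<rfloor> \<in> {\<lfloor>x / r\<rfloor> - 1, \<lfloor>x / r\<rfloor>, \<lfloor>x / r\<rfloor> + 1}"
proof -
  have "\<bar>x / r - y / r\<bar> < 1" using assms
    by (simp add: diff_divide_distrib[symmetric] abs_divide divide_less_eq)
  then have "x / r - 1 \<le> y / r" "y / r \<le> x / r + 1" by auto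
  then have "\<lfloor>x / r\<rfloor> - 1 \<le> \<lfloor>y / r\<rfloor>" "\<lfloor>y / r\<rfloor> \<le> \<lfloor>x / r\<rfloor> + 1"
    using floor_mono[of "x / r - 1" "y / r"] floor_mono[of "y / r" "x / r + 1"] by auto
  then show ?thesis by auto
qed

lemma amgm: "(a::real) * b \<le> (a\<^sup>2 + b\<^sup>2) / 2"
proof -
  have "0 \<le> (a - b)\<^sup>2" by simp
  then show ?thesis by (simp add: power2_diff field_simps)
qed

lemma sq_sum:
  assumes "finite S" "r > 0"
  shows "(\<Sum>j\<in>S. (measure M (cell r j))\<^sup>2) \<le> (\<integral>x. fb r x \<partial>M)"
proof -
  define g where "g x = (\<Sum>j\<in>S. measure M (cell r j) * indicator (cell r j) x)" for x
  have gi: "integrable M g" unfolding g_def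
  proof (rule Bochner_Integration.integrable_sum)
    fix j show "integrable M (\<lambda>x. measure M (cell r j) * indicator (cell r j) x)"
      by (rule integrable_mult_right, rule integrable_real_indicator) (auto simp: less_top[symmetric])
  qed
  have "(\<integral>x. g x \<partial>M) = (\<Sum>j\<in>S. measure M (cell r j) * (\<integral>x. indicator (cell r j) x \<partial>M))"
    unfolding g_def
    by (subst Bochner_Integration.integral_sum)
       (auto intro!: integrable_mult_right integrable_real_indicator simp: less_top[symmetric])
  also have "\<dots> = (\<Sum>j\<in>S. (measure M (cell r j))\<^sup>2)"
    using cell_sub by (simp add: Int_absorb2 power2_eq_square)
  finally have eq: "(\<integral>x. g x \<partial>M) = (\<Sum>j\<in>S. (measure M (cell r j))\<^sup>2)" .
  have "g x \<le> fb r x" if x: "x \<in> space M" for x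
  proof -
    have "g x = (\<Sum>j\<in>S. if j = \<lfloor>x / r\<rfloor> then measure M (cell r j) else 0)"
      unfolding g_def using x by (intro sum.cong) (auto simp: cell_def indicator_def)
    also have "\<dots> = (if \<lfloor>x / r\<rfloor> \<in> S then measure M (cell r \<lfloor>x / r\<rfloor>) else 0)"
      using assms(1) by (simp add: sum.delta')
    also have "\<dots> \<le> fb r x"
    proof -
      have "cell r \<lfloor>x / r\<rfloor> \<subseteq> ball x r \<inter> space M"
        using floor_close[OF assms(2)] by (auto simp: cell_def dist_real_def)
      then have "measure M (cell r \<lfloor>x / r\<rfloor>) \<le> fb r x"
        unfolding fb_def by (intro finite_measure_mono ball_sets)
      then show ?thesis by (auto simp: fb_def)
    qed
    finally show ?thesis .
  qed
  then have "(\<integral>x. g x \<partial>M) \<le> (\<integral>x. fb r x \<partial>M)"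
    by (intro integral_mono gi fb_int)
  then show ?thesis using eq by simp
qed

lemma sum_cells_le1:
  assumes "finite S"
  shows "(\<Sum>j\<in>S. measure M (cell r j)) \<le> 1"
proof -
  have "(\<Sum>j\<in>S. measure M (cell r j)) = measure M (\<Union>j\<in>S. cell r j)"
    using assms by (intro finite_measure_finite_Union[symmetric]) (auto simp: disjoint_family_on_def cell_def)
  also have "\<dots> \<le> 1" by (rule prob_le_1)
  finally show ?thesis .
qed

lemma shift_sum:
  assumes "finite S" "r > 0"
  shows "(\<Sum>j\<in>S. measure M (cell r j) * measure M (cell r (j + l))) \<le> (\<integral>x. fb r x \<partial>M)"
proof -
  have "(\<Sum>j\<in>S. measure M (cell r j) * measure M (cell r (j + l)))
      \<le> (\<Sum>j\<in>S. ((measure M (cell r j))\<^sup>2 + (measure M (cell r (j + l)))\<^sup>2) / 2)"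
    by (intro sum_mono amgm)
  also have "\<dots> = ((\<Sum>j\<in>S. (measure M (cell r j))\<^sup>2) + (\<Sum>j\<in>S. (measure M (cell r (j + l)))\<^sup>2)) / 2"
    by (simp only: sum_divide_distrib[symmetric] sum.distrib)
  also have "(\<Sum>j\<in>S. (measure M (cell r (j + l)))\<^sup>2) = (\<Sum>j\<in>(\<lambda>j. j + l) ` S. (measure M (cell r j))\<^sup>2)"
    by (subst sum.reindex) (auto simp: inj_on_def)
  also have "((\<Sum>j\<in>S. (measure M (cell r j))\<^sup>2) + \<dots>) / 2 \<le> ((\<integral>x. fb r x \<partial>M) + (\<integral>x. fb r x \<partial>M)) / 2"
    using sq_sum[OF assms] sq_sum[OF finite_imageI[OF assms(1)] assms(2)] by (intro divide_right_mono add_mono) auto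
  finally show ?thesis by simp
qed

lemma shift_sum1:
  assumes "finite S"
  shows "(\<Sum>j\<in>S. measure M (cell r (j + l))) \<le> 1"
proof -
  have "(\<Sum>j\<in>S. measure M (cell r (j + l))) = (\<Sum>j\<in>(\<lambda>j. j + l) ` S. measure M (cell r j))"
    by (subst sum.reindex) (auto simp: inj_on_def)
  also have "\<dots> \<le> 1" using assms by (intro sum_cells_le1) auto
  finally show ?thesis .
qed


lemma cv_sets: "cell r j \<inter> (T ^^ k) -` cell r j' \<in> sets M"
proof -
  have "cell r j \<inter> (T ^^ k) -` cell r j' = ((T ^^ k) -` cell r j' \<inter> space M) \<inter> cell r j"
    using cell_sub by blast
  also have "\<dots> \<in> sets M" by (intro sets.Int measurable_sets[OF Tn_meas cell_sets] cell_sets)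
  finally show ?thesis .
qed

lemma mix_cell:
  assumes mix: "\<And>\<psi> \<phi> (n::nat). bounded_variation (space M) \<psi> \<Longrightarrow> integrable M \<phi> \<Longrightarrow>
        \<bar>(\<integral>x. \<psi> x * \<phi> ((T ^^ n) x) \<partial>M) - (\<integral>x. \<psi> x \<partial>M) * (\<integral>x. \<phi> x \<partial>M)\<bar>
          \<le> Cm * bv_norm (space M) \<psi> * (\<integral>x. \<bar>\<phi> x\<bar> \<partial>M) * exp (- \<theta> * real n)"
    and "Cm > 0" "r > 0"
  shows "measure M (cell r j \<inter> (T ^^ k) -` cell r j')
     \<le> measure M (cell r j) * measure M (cell r j') + 3 * Cm * measure M (cell r j') * exp (- \<theta> * real k)"
proof -
  define \<psi> where "\<psi> = (indicator (cell r j) :: real \<Rightarrow> real)"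
  define \<phi> where "\<phi> = (indicator (cell r j') :: real \<Rightarrow> real)"
  have "of_int j * r \<le> (of_int j + 1) * r" using assms(3) by (simp add: field_simps)
  from bv_ind[OF not_empty this] have bv: "bounded_variation (space M) \<psi>" "bv_norm (space M) \<psi> \<le> 3"
    unfolding \<psi>_def cell_alt[OF assms(3)] by auto
  have phi_int: "integrable M \<phi>" unfolding \<phi>_def
    by (rule integrable_real_indicator) (auto simp: less_top[symmetric])
  have "(\<lambda>x. \<psi> x * \<phi> ((T ^^ k) x)) = indicator (cell r j \<inter> (T ^^ k) -` cell r j')"
    by (auto simp: \<psi>_def \<phi>_def indicator_def fun_eq_iff)
  then have e1: "(\<integral>x. \<psi> x * \<phi> ((T ^^ k) x) \<partial>M) = measure M (cell r j \<inter> (T ^^ k) -` cell r j')"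
    using cell_sub by (simp add: Int_absorb2 inf.coboundedI1)
  have e2: "(\<integral>x. \<psi> x \<partial>M) = measure M (cell r j)" unfolding \<psi>_def
    using cell_sub by (simp add: Int_absorb2)
  have e3: "(\<integral>x. \<phi> x \<partial>M) = measure M (cell r j')" unfolding \<phi>_def
    using cell_sub by (simp add: Int_absorb2)
  have "(\<lambda>x. \<bar>\<phi> x\<bar>) = \<phi>" by (auto simp: \<phi>_def indicator_def fun_eq_iff)
  then have e4: "(\<integral>x. \<bar>\<phi> x\<bar> \<partial>M) = measure M (cell r j')" using e3 by simp
  have m: "\<bar>measure M (cell r j \<inter> (T ^^ k) -` cell r j') - measure M (cell r j) * measure M (cell r j')\<bar>
     \<le> Cm * bv_norm (space M) \<psi> * measure M (cell r j') * exp (- \<theta> * real k)"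
    using mix[OF bv(1) phi_int, of k] unfolding e1 e2 e3 e4 .
  have "Cm * bv_norm (space M) \<psi> * measure M (cell r j') * exp (- \<theta> * real k)
      \<le> Cm * 3 * measure M (cell r j') * exp (- \<theta> * real k)"
    using bv(2) assms(2) by (intro mult_right_mono mult_left_mono) auto
  with m show ?thesis by linarith
qed

end

locale mixsys = sys +
  fixes Cm \<theta> :: real
  assumes Cm_pos: "Cm > 0" and th_pos: "\<theta> > 0"
  and mix: "\<And>\<psi> \<phi> (n::nat). bounded_variation (space M) \<psi> \<Longrightarrow> integrable M \<phi> \<Longrightarrow>
        \<bar>(\<integral>x. \<psi> x * \<phi> ((T ^^ n) x) \<partial>M) - (\<integral>x. \<psi> x \<partial>M) * (\<integral>x. \<phi> x \<partial>M)\<bar>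
          \<le> Cm * bv_norm (space M) \<psi> * (\<integral>x. \<bar>\<phi> x\<bar> \<partial>M) * exp (- \<theta> * real n)"
begin

lemma U_le:
  assumes "finite S" "r > 0"
  shows "measure M (\<Union>j\<in>S. cell r j \<inter> (T ^^ k) -` cell r (j + l))
     \<le> (\<integral>x. fb r x \<partial>M) + 3 * Cm * exp (- \<theta> * real k)"
proof -
  let ?E = "exp (- \<theta> * real k)"
  have "measure M (\<Union>j\<in>S. cell r j \<inter> (T ^^ k) -` cell r (j + l))
      \<le> (\<Sum>j\<in>S. measure M (cell r j \<inter> (T ^^ k) -` cell r (j + l)))"
    using assms(1) cv_sets by (intro finite_measure_subadditive_finite) auto
  also have "\<dots> \<le> (\<Sum>j\<in>S. measure M (cell r j) * measure M (cell r (j + l))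
       + 3 * Cm * ?E * measure M (cell r (j + l)))"
  proof (rule sum_mono)
    fix j show "measure M (cell r j \<inter> (T ^^ k) -` cell r (j + l))
       \<le> measure M (cell r j) * measure M (cell r (j + l)) + 3 * Cm * ?E * measure M (cell r (j + l))"
      using mix_cell[OF mix Cm_pos assms(2), of j k "j + l"] by (simp add: ac_simps)
  qed
  also have "\<dots> = (\<Sum>j\<in>S. measure M (cell r j) * measure M (cell r (j + l)))
       + 3 * Cm * ?E * (\<Sum>j\<in>S. measure M (cell r (j + l)))"
    by (simp add: sum.distrib sum_distrib_left)
  also have "\<dots> \<le> (\<integral>x. fb r x \<partial>M) + 3 * Cm * ?E * 1"
    using shift_sum[OF assms] shift_sum1[OF assms(1)] Cm_pos
    by (intro add_mono mult_left_mono) auto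
  finally show ?thesis by simp
qed

lemma A_sets: "A_set M T r k \<in> sets M"
  unfolding A_set_def by measurable

lemma A_bound:
  assumes "r > 0"
  shows "measure M (A_set M T r k) \<le> 3 * (\<integral>x. fb r x \<partial>M) + 9 * Cm * exp (- \<theta> * real k)"
proof -
  let ?B = "3 * (\<integral>x. fb r x \<partial>M) + 9 * Cm * exp (- \<theta> * real k)"
  define S where "S N = {- int N .. int N}" for N
  define U where "U l N = (\<Union>j\<in>S N. cell r j \<inter> (T ^^ k) -` cell r (j + l))" for l N
  define W where "W N = space M - (\<Union>j\<in>S N. cell r j)" for N
  have finS: "finite (S N)" for N by (simp add: S_def)
  have U_sets: "U l N \<in> sets M" for l N
    unfolding U_def using finS cv_sets by (intro sets.finite_UN) auto
  have W_sets: "W N \<in> sets M" for N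
    unfolding W_def using finS by (intro sets.Diff sets.finite_UN) auto
  have cover: "A_set M T r k \<subseteq> U (-1) N \<union> U 0 N \<union> U 1 N \<union> W N" for N
  proof
    fix x assume xA: "x \<in> A_set M T r k"
    then have xs: "x \<in> space M" and d: "\<bar>x - (T ^^ k) x\<bar> < r" by (auto simp: A_set_def)
    show "x \<in> U (-1) N \<union> U 0 N \<union> U 1 N \<union> W N"
    proof (cases "\<lfloor>x / r\<rfloor> \<in> S N")
      case True
      define j where "j = \<lfloor>x / r\<rfloor>"
      have xc: "x \<in> cell r j" using xs by (simp add: cell_def j_def)
      have ys: "(T ^^ k) x \<in> space M" using Tn_space[OF xs] .
      have "\<lfloor>(T ^^ k) x / r\<rfloor> \<in> {j - 1, j, j + 1}"
        using floor_near[OF assms d] by (simp add: j_def)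
      then have "(T ^^ k) x \<in> cell r (j + -1) \<or> (T ^^ k) x \<in> cell r (j + 0) \<or> (T ^^ k) x \<in> cell r (j + 1)"
        using ys by (auto simp: cell_def)
      moreover have jS: "j \<in> S N" using True by (simp add: j_def)
      ultimately show ?thesis
      proof (elim disjE)
        assume "(T ^^ k) x \<in> cell r (j + -1)"
        then have "x \<in> U (-1) N" unfolding U_def using xc jS by blast
        then show ?thesis by blast
      next
        assume "(T ^^ k) x \<in> cell r (j + 0)"
        then have "x \<in> U 0 N" unfolding U_def using xc jS by blast
        then show ?thesis by blast
      next
        assume "(T ^^ k) x \<in> cell r (j + 1)"
        then have "x \<in> U 1 N" unfolding U_def using xc jS by blast
        then show ?thesis by blast
      qed
    next
      case False
      then show ?thesis using xs by (auto simp: W_def cell_def)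
    qed
  qed
  have bnd: "measure M (A_set M T r k) \<le> ?B + measure M (W N)" for N
  proof -
    have "measure M (A_set M T r k) \<le> measure M (U (-1) N \<union> U 0 N \<union> U 1 N \<union> W N)"
      using cover U_sets W_sets by (intro finite_measure_mono) auto
    also have "\<dots> \<le> measure M (U (-1) N) + measure M (U 0 N) + measure M (U 1 N) + measure M (W N)"
    proof -
      have "measure M (U (-1) N \<union> U 0 N \<union> U 1 N \<union> W N) \<le> measure M (U (-1) N \<union> U 0 N \<union> U 1 N) + measure M (W N)"
        by (rule measure_Un_le[OF sets.Un[OF sets.Un[OF U_sets U_sets] U_sets] W_sets])
      moreover have "measure M (U (-1) N \<union> U 0 N \<union> U 1 N) \<le> measure M (U (-1) N \<union> U 0 N) + measure M (U 1 N)"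
        by (rule measure_Un_le[OF sets.Un[OF U_sets U_sets] U_sets])
      moreover have "measure M (U (-1) N \<union> U 0 N) \<le> measure M (U (-1) N) + measure M (U 0 N)"
        by (rule measure_Un_le[OF U_sets U_sets])
      ultimately show ?thesis by linarith
    qed
    also have "\<dots> \<le> ?B + measure M (W N)"
      using U_le[OF finS assms, of k "-1" N] U_le[OF finS assms, of k 0 N] U_le[OF finS assms, of k 1 N]
      unfolding U_def by simp
    finally show ?thesis .
  qed
  have dec: "decseq W"
    unfolding decseq_def W_def
  proof (intro allI impI)
    fix m n :: nat assume "m \<le> n"
    then have "S m \<subseteq> S n" by (auto simp: S_def)
    then show "space M - (\<Union>j\<in>S n. cell r j) \<subseteq> space M - (\<Union>j\<in>S m. cell r j)" by blast
  qed
  have inter: "(\<Inter>N. W N) = {}"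
  proof (rule ccontr)
    assume "(\<Inter>N. W N) \<noteq> {}"
    then obtain x where "\<forall>N. x \<in> W N" by blast
    then have "x \<in> W (nat \<bar>\<lfloor>x / r\<rfloor>\<bar>)" by blast
    moreover have "\<lfloor>x / r\<rfloor> \<in> S (nat \<bar>\<lfloor>x / r\<rfloor>\<bar>)" unfolding S_def by simp arith
    ultimately show False unfolding W_def cell_def by blast
  qed
  have "(\<lambda>N. measure M (W N)) \<longlonglongrightarrow> 0"
    using finite_Lim_measure_decseq[of W] W_sets dec inter by auto
  then have "(\<lambda>N. ?B + measure M (W N)) \<longlonglongrightarrow> ?B + 0" by (intro tendsto_add) auto
  then show ?thesis using bnd by (intro LIMSEQ_le_const[where X="\<lambda>N. ?B + measure M (W N)"]) auto
qed


definition UF :: "nat \<Rightarrow> real \<Rightarrow> real set" where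
  "UF n r = (\<Union>i\<in>{..<n}. \<Union>k\<in>{1..<n}. (T ^^ i) -` A_set M T r k \<inter> space M)"

lemma UF_sets: "UF n r \<in> sets M"
  unfolding UF_def
  by (intro sets.finite_UN finite_lessThan finite_atLeastLessThan ballI measurable_sets[OF Tn_meas A_sets])

lemma F_sub: "F_set M T n r \<subseteq> UF n r"
proof
  fix x assume "x \<in> F_set M T n r"
  then obtain i j where xs: "x \<in> space M" and ij: "i < j" "j < n"
    and d: "\<bar>(T ^^ i) x - (T ^^ j) x\<bar> < r" by (auto simp: F_set_def)
  have "(T ^^ j) x = (T ^^ (j - i)) ((T ^^ i) x)"
    using ij by (metis funpow_add le_add_diff_inverse2 less_imp_le o_apply)
  then have "(T ^^ i) x \<in> A_set M T r (j - i)"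
    using d Tn_space[OF xs] by (simp add: A_set_def)
  moreover have "j - i \<in> {1..<n}" "i \<in> {..<n}" using ij by auto
  ultimately show "x \<in> UF n r" unfolding UF_def using xs by blast
qed

lemma UF_le: "measure M (UF n r) \<le> real n * (\<Sum>k\<in>{1..<n}. measure M (A_set M T r k))"
proof -
  have "measure M (UF n r) \<le> (\<Sum>i\<in>{..<n}. measure M (\<Union>k\<in>{1..<n}. (T ^^ i) -` A_set M T r k \<inter> space M))"
    unfolding UF_def
  proof (intro finite_measure_subadditive_finite finite_lessThan image_subsetI)
    fix i show "(\<Union>k\<in>{1..<n}. (T ^^ i) -` A_set M T r k \<inter> space M) \<in> sets M"
      by (intro sets.finite_UN finite_atLeastLessThan ballI measurable_sets[OF Tn_meas A_sets])
  qed
  also have "\<dots> \<le> (\<Sum>i\<in>{..<n}. \<Sum>k\<in>{1..<n}. measure M ((T ^^ i) -` A_set M T r k \<inter> space M))"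
    by (intro sum_mono finite_measure_subadditive_finite) (auto intro!: measurable_sets[OF Tn_meas A_sets])
  also have "\<dots> = (\<Sum>i\<in>{..<n}. \<Sum>k\<in>{1..<n}. measure M (A_set M T r k))"
    by (simp add: pres[OF A_sets])
  finally show ?thesis by simp
qed

lemma UF_bound:
  fixes C s h r :: real and n :: nat
  assumes short: "\<And>\<rho> n. \<rho> > 0 \<Longrightarrow> n \<ge> 1 \<Longrightarrow> measure M (A_set M T \<rho> n) \<le> C * \<rho> powr s"
    and pos: "C > 0" "s > 0" "r > 0" "h > 0" and n3: "n \<ge> 3"
    and rb: "r \<le> 1 / ((real n * ln (real n)) powr (1 / s) * h)"
    and D: "(\<integral>x. fb r x \<partial>M) \<le> 1 / ((real n)\<^sup>2 * h)"
  shows "measure M (UF n r) \<le> C * (3 / \<theta> + 1) * h powr (- s) + 3 / h + 9 * Cm / real n"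
proof -
  let ?x = "real n"
  define K where "K = nat \<lceil>3 * ln ?x / \<theta>\<rceil>"
  define c where "c = 3 / (?x\<^sup>2 * h) + 9 * Cm / ?x ^ 3"
  define a where "a = C * r powr s"
  have x3: "?x \<ge> 3" using n3 by simp
  have c0: "c \<ge> 0" unfolding c_def using pos Cm_pos by simp
  have a0: "a \<ge> 0" unfolding a_def using pos by simp
  have lnx: "ln ?x \<ge> 0" using x3 by simp
  have Kge: "3 * ln ?x / \<theta> \<le> real K" unfolding K_def
    using lnx th_pos le_of_int_ceiling[of "3 * ln ?x / \<theta>"] by simp
  have e3: "exp (- (3 * ln ?x)) = 1 / ?x ^ 3"
  proof -
    have "3 * ln ?x = ln (?x ^ 3)" using x3 ln_realpow[of ?x 3] by simp
    then show ?thesis using x3 by (simp add: exp_minus inverse_eq_divide)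
  qed
  have each: "measure M (A_set M T r k) \<le> (if k < K then a else 0) + c" if k: "k \<in> {1..<n}" for k
  proof (cases "k < K")
    case True
    then show ?thesis using short[OF pos(3), of k] k c0 by (simp add: a_def)
  next
    case False
    have "\<theta> * real k \<ge> 3 * ln ?x"
    proof -
      have "3 * ln ?x = \<theta> * (3 * ln ?x / \<theta>)" using th_pos by simp
      also have "\<dots> \<le> \<theta> * real k" using Kge False th_pos by (intro mult_left_mono) auto
      finally show ?thesis .
    qed
    then have "exp (- \<theta> * real k) \<le> exp (- (3 * ln ?x))" by simp
    then have ek: "exp (- \<theta> * real k) \<le> 1 / ?x ^ 3" using e3 by simp
    have "9 * Cm * exp (- \<theta> * real k) \<le> 9 * Cm / ?x ^ 3"
      using mult_left_mono[OF ek, of "9 * Cm"] Cm_pos by simp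
    moreover have "3 * (\<integral>x. fb r x \<partial>M) \<le> 3 / (?x\<^sup>2 * h)" using D by simp
    ultimately show ?thesis using A_bound[OF pos(3), of k] False by (simp add: c_def)
  qed
  have "(\<Sum>k\<in>{1..<n}. measure M (A_set M T r k)) \<le> (\<Sum>k\<in>{1..<n}. (if k < K then a else 0) + c)"
    by (intro sum_mono each)
  also have "\<dots> = (\<Sum>k\<in>{1..<n} \<inter> {..<K}. a) + real (n - 1) * c"
  proof -
    have "(\<Sum>k\<in>{1..<n}. (if k < K then a else 0)) = (\<Sum>k\<in>{1..<n} \<inter> {..<K}. a)"
      by (subst sum.inter_restrict) auto
    then show ?thesis by (simp add: sum.distrib)
  qed
  also have "(\<Sum>k\<in>{1..<n} \<inter> {..<K}. a) \<le> real K * a"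
  proof -
    have "card ({1..<n} \<inter> {..<K}) \<le> card {..<K}" by (intro card_mono) auto
    then show ?thesis using a0 by (simp add: mult_right_mono)
  qed
  also have "real (n - 1) * c \<le> ?x * c" using c0 by (intro mult_right_mono) auto
  finally have sb: "(\<Sum>k\<in>{1..<n}. measure M (A_set M T r k)) \<le> real K * a + ?x * c" by simp
  have "measure M (UF n r) \<le> ?x * (real K * a + ?x * c)"
    using UF_le[of n r] sb by (meson order.trans mult_left_mono of_nat_0_le_iff)
  also have "\<dots> \<le> C * (3 / \<theta> + 1) * h powr (- s) + 3 / h + 9 * Cm / ?x"
    unfolding a_def c_def
    by (rule arith_bound[OF n3 pos(3) pos(4) pos(2) pos(1) th_pos Cm_pos rb K_def])
  finally show ?thesis .
qed

end

theorem mainTheorem12: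
  fixes M :: "real measure" and T :: "real \<Rightarrow> real" and X :: "real set"
    and C s :: real and r h :: "nat \<Rightarrow> real"
  assumes "is_interval X"
    and "prob_space M"
    and "space M = X" and "sets M = sets (restrict_space borel X)"
    and "T \<in> measurable M M" and "distr M M T = M"
    and "exp_mixing_BV_L1 M T"
    and "C > 0" and "s > 0"
    and "\<And>\<rho> n. \<rho> > 0 \<Longrightarrow> n \<ge> 1 \<Longrightarrow> measure M (A_set M T \<rho> n) \<le> C * \<rho> powr s"
    and "\<And>n. r n > 0" and "\<And>n. h n > 0"
    and "filterlim h at_top sequentially"
    and "eventually (\<lambda>n. r n \<le> 1 / ((real n * ln (real n)) powr (1 / s) * h n)
           \<and> (\<integral>x. measure M (ball x (r n) \<inter> space M) \<partial>M) \<le> 1 / ((real n)\<^sup>2 * h n))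
         sequentially"
  shows "measure M (\<Union>N. \<Inter>n\<in>{N..}. F_set M T n (r n)) = 0"
proof -
  from assms(7) obtain Cm \<theta> where Cm: "Cm > 0" and th: "\<theta> > 0"
    and mixall: "\<And>\<psi> \<phi> (n::nat). bounded_variation (space M) \<psi> \<Longrightarrow> integrable M \<phi> \<Longrightarrow>
        \<bar>(\<integral>x. \<psi> x * \<phi> ((T ^^ n) x) \<partial>M) - (\<integral>x. \<psi> x \<partial>M) * (\<integral>x. \<phi> x \<partial>M)\<bar>
          \<le> Cm * bv_norm (space M) \<psi> * (\<integral>x. \<bar>\<phi> x\<bar> \<partial>M) * exp (- \<theta> * real n)"
    unfolding exp_mixing_BV_L1_def by blast
  have se: "sets M = sets (restrict_space borel (space M))" using assms(3,4) by simp
  have sysI: "sys M T" unfolding sys_def sys_axioms_def using assms(2) se assms(5) assms(6) by simp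
  have mixI: "mixsys_axioms M T Cm \<theta>" unfolding mixsys_axioms_def
    by (intro conjI Cm th allI impI mixall) assumption+
  interpret mixsys M T Cm \<theta> using sysI mixI by (rule mixsys.intro)
  define b where "b n = C * (3 / \<theta> + 1) * h n powr (- s) + 3 / h n + 9 * Cm / real n" for n
  have ev: "eventually (\<lambda>n. measure M (UF n (r n)) \<le> b n) sequentially"
    using assms(14) eventually_ge_at_top[of 3]
  proof eventually_elim
    case (elim n)
    then show ?case unfolding b_def
      by (intro UF_bound[OF assms(10) assms(8) assms(9) assms(11) assms(12)]) (auto simp: fb_def)
  qed
  have t1: "(\<lambda>n. h n powr (- s)) \<longlonglongrightarrow> 0"
    using assms(9,13) by (intro tendsto_neg_powr) auto
  have t2: "(\<lambda>n. inverse (h n)) \<longlonglongrightarrow> 0"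
    using assms(13) by (rule tendsto_inverse_0_at_top)
  have t3: "(\<lambda>n. inverse (real n)) \<longlonglongrightarrow> 0" by (rule lim_inverse_n)
  have "(\<lambda>n. C * (3 / \<theta> + 1) * h n powr (- s) + 3 * inverse (h n) + 9 * Cm * inverse (real n))
      \<longlonglongrightarrow> C * (3 / \<theta> + 1) * 0 + 3 * 0 + 9 * Cm * 0"
    by (intro tendsto_intros t1 t2 t3)
  then have b0: "b \<longlonglongrightarrow> 0" unfolding b_def by (simp add: divide_inverse)
  have UF0: "(\<lambda>n. measure M (UF n (r n))) \<longlonglongrightarrow> 0"
    by (rule tendsto_sandwich[OF _ ev tendsto_const b0]) simp
  define V where "V N = (\<Inter>m\<in>{N..}. UF m (r m))" for N
  have V_sets: "V N \<in> sets M" for N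
    unfolding V_def by (intro sets.countable_INT') (auto intro: UF_sets countableI_type)
  have V0: "measure M (V N) = 0" for N
  proof -
    have "\<forall>m\<ge>N. measure M (V N) \<le> measure M (UF m (r m))"
      unfolding V_def by (auto intro!: finite_measure_mono UF_sets)
    then have "measure M (V N) \<le> 0"
      by (intro LIMSEQ_le_const[OF UF0]) blast
    then show ?thesis using measure_nonneg[of M "V N"] by linarith
  qed
  have Vnull: "V N \<in> null_sets M" for N
    using V_sets V0 by (intro null_setsI) (auto simp: emeasure_eq_measure)
  then have Unull: "(\<Union>N. V N) \<in> null_sets M" by (intro null_sets_UN) auto
  have sub: "(\<Union>N. \<Inter>n\<in>{N..}. F_set M T n (r n)) \<subseteq> (\<Union>N. V N)"
  proof
    fix x assume "x \<in> (\<Union>N. \<Inter>n\<in>{N..}. F_set M T n (r n))"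
    then obtain N where N: "\<And>n. n \<ge> N \<Longrightarrow> x \<in> F_set M T n (r n)" by auto
    have "x \<in> V N" unfolding V_def
    proof (rule InterI)
      fix Y assume "Y \<in> (\<lambda>m. UF m (r m)) ` {N..}"
      then obtain m where "m \<ge> N" "Y = UF m (r m)" by auto
      then show "x \<in> Y" using N F_sub by blast
    qed
    then show "x \<in> (\<Union>N. V N)" by blast
  qed
  have "measure M (\<Union>N. \<Inter>n\<in>{N..}. F_set M T n (r n)) \<le> measure M (\<Union>N. V N)"
    using sub Unull by (intro finite_measure_mono) auto
  also have "\<dots> = 0" using Unull by (simp add: measure_def null_setsD1)
  finally show ?thesis using measure_nonneg[of M] by (meson antisym)
qed

end
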